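(* For every integer $t$, \begin{align*} \sum_{n=1}^\infty\binom{2n}{n}\frac{O_nL_{2n+t}}{12^n}&=\frac{\sqrt3}{2}\bigl(2L_{t+1}\ln\alpha+\sqrt5\,F_{t+1}\ln3\bigr),\\ \sum_{n=1}^\infty\binom{2n}{n}\frac{O_nF_{2n+t}}{12^n}&=\frac{\sqrt{15}}{10}\bigl(2\sqrt5\,F_{t+1}\ln\alpha+L_{t+1}\ln3\bigr), \end{align*} and, for every gibonacci sequence $G_j=G_j(a,b)$, \[ \sum_{n=1}^\infty\binom{2n}{n}\frac{O_nG_{2n+t}}{12^n}=\frac{\sqrt{15}}{10}\bigl(2\sqrt5\,G_{t+1}\ln\alpha+(G_{t+2}+G_t)\ln3\bigr). \]
   Context: $O_n=\sum_{j=1}^n\frac1{2j-1}$. $F_n$ and $L_n$ are the Fibonacci and Lucas numbers ($F_0=0,F_1=1$, $L_0=2,L_1=1$, $u_n=u_{n-1}+u_{n-2}$), extended to all integers by the recurrence. $\alpha=(1+\sqrt5)/2$, $\beta=-1/\alpha$. For numbers $a,b$ not both zero, the gibonacci sequence $G_j=G_j(a,b)$ is defined by $G_0=a$, $G_1=b$, $G_j=G_{j-1}+G_{j-2}$, extended to negative indices by $G_{-j}=G_{-(j-2)}-G_{-(j-1)}$; equivalently $G_j=\frac{(b-a\beta)\alpha^j+(a\alpha-b)\beta^j}{\alpha-\beta}$. *)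

theory Defs
  imports Complex_Main
begin

fun gib_pos :: "real \<Rightarrow> real \<Rightarrow> nat \<Rightarrow> real" where
  "gib_pos a b 0 = a"
| "gib_pos a b (Suc 0) = b"
| "gib_pos a b (Suc (Suc j)) = gib_pos a b (Suc j) + gib_pos a b j"

fun gib_neg :: "real \<Rightarrow> real \<Rightarrow> nat \<Rightarrow> real" where
  "gib_neg a b 0 = a"
| "gib_neg a b (Suc 0) = b - a"
| "gib_neg a b (Suc (Suc j)) = gib_neg a b j - gib_neg a b (Suc j)"

definition gib :: "real \<Rightarrow> real \<Rightarrow> int \<Rightarrow> real" where
  "gib a b k = (if k \<ge> 0 then gib_pos a b (nat k) else gib_neg a b (nat (- k)))"

definition Fib :: "int \<Rightarrow> real" where "Fib k = gib 0 1 k"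
definition Luc :: "int \<Rightarrow> real" where "Luc k = gib 2 1 k"

definition golden :: real where "golden = (1 + sqrt 5) / 2"

definition Oh :: "nat \<Rightarrow> real" where
  "Oh n = (\<Sum>j = 1..n. 1 / (2 * real j - 1))"

end

theory Submission imports Defs "HOL-Analysis.Analysis" begin


lemma cb_rec_nat: "Suc n * ((2 * Suc n) choose Suc n) = 2 * (2 * n + 1) * ((2 * n) choose n)"
proof -
  have 1: "Suc n * ((2 * Suc n) choose Suc n) = (2 * n + 2) * ((2 * n + 1) choose n)"
    using Suc_times_binomial[of n "2 * n + 1"] by simp
  have 2: "Suc n * ((2 * n + 1) choose n) = (2 * n + 1) * ((2 * n) choose n)"
  proof -
    have "(2 * n + 1) * ((2 * n) choose n) = ((2*n+1) choose Suc n) * Suc n"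
      using Suc_times_binomial_eq[of "2*n" n] by simp
    moreover have "((2*n+1) choose Suc n) = ((2*n+1) choose n)"
      using binomial_symmetric[of "Suc n" "2*n+1"] by simp
    ultimately show ?thesis by simp
  qed
  have "Suc n * (Suc n * ((2 * Suc n) choose Suc n)) = Suc n * (2 * (2 * n + 1) * ((2 * n) choose n))"
  proof -
    have "Suc n * (Suc n * ((2 * Suc n) choose Suc n)) = Suc n * ((2 * n + 2) * ((2 * n + 1) choose n))"
      by (simp only: 1)
    also have "\<dots> = (2 * n + 2) * (Suc n * ((2 * n + 1) choose n))" by (simp only: ac_simps)
    also have "\<dots> = (2 * n + 2) * ((2 * n + 1) * ((2 * n) choose n))" by (simp only: 2)
    also have "\<dots> = Suc n * (2 * (2 * n + 1) * ((2 * n) choose n))"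
    proof -
      have "\<And>c::nat. (2 * n + 2) * ((2 * n + 1) * c) = Suc n * (2 * (2 * n + 1) * c)"
        by (simp add: algebra_simps)
      then show ?thesis .
    qed
    finally show ?thesis .
  qed
  then show ?thesis by (metis mult_cancel1 Suc_neq_Zero)
qed

lemma cb_rec: "real (Suc n) * real ((2 * Suc n) choose Suc n) = (4 * real n + 2) * real ((2 * n) choose n)"
proof -
  have "real (Suc n * ((2 * Suc n) choose Suc n)) = real (2 * (2 * n + 1) * ((2 * n) choose n))"
    using cb_rec_nat by presburger
  then show ?thesis by (simp add: algebra_simps)
qed

lemma gchoose_half: "((-1/2::real) gchoose n) * (-4) ^ n = real ((2 * n) choose n)"
proof (induction n)
  case 0
  then show ?case by simp
next
  case (Suc n)
  have f: "fact k * ((-1/2::real) gchoose k) = (\<Prod>i = 0..<k. (-1/2) - of_nat i)" for k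
    by (rule gbinomial_mult_fact)
  have "fact (Suc n) * ((-1/2::real) gchoose Suc n) = (fact n * ((-1/2::real) gchoose n)) * (-1/2 - real n)"
    unfolding f by simp
  hence "fact n * (real (Suc n) * ((-1/2::real) gchoose Suc n)) = fact n * (((-1/2::real) gchoose n) * (-1/2 - real n))"
    by (simp add: fact_Suc algebra_simps del: of_nat_Suc)
  hence "real (Suc n) * ((-1/2::real) gchoose Suc n) = ((-1/2::real) gchoose n) * (-1/2 - real n)"
    by simp
  hence g: "((-1/2::real) gchoose Suc n) = ((-1/2::real) gchoose n) * (-1/2 - real n) / real (Suc n)"
    by (simp add: field_simps del: of_nat_Suc)
  have "((-1/2::real) gchoose Suc n) * (-4) ^ Suc n = (((-1/2::real) gchoose n) * (-4)^n) * (4 * real n + 2) / real (Suc n)"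
    unfolding g by (simp add: field_simps del: of_nat_Suc)
  also have "\<dots> = real ((2 * Suc n) choose Suc n)"
    unfolding Suc using cb_rec[of n] by (simp add: field_simps del: of_nat_Suc)
  finally show ?case .
qed


definition lc :: "nat \<Rightarrow> real" where "lc k = (if k = 0 then 0 else 4 ^ k / real k)"
definition cb :: "nat \<Rightarrow> real" where "cb n = real ((2 * n) choose n)"

lemma cb_rec': "real (Suc n) * cb (Suc n) = (4 * real n + 2) * cb n"
  unfolding cb_def by (rule cb_rec)

lemma Oh_Suc: "Oh (Suc n) = Oh n + 1 / (2 * real n + 1)"
  unfolding Oh_def by simp

lemma Oh_0: "Oh 0 = 0" unfolding Oh_def by simp

lemma S_rec:
  "real (Suc n) * (\<Sum>i\<le>Suc n. lc i * cb (Suc n - i))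
     = (4 * real n + 2) * (\<Sum>i\<le>n. lc i * cb (n - i)) + 4 * cb n"
proof -
  define u where "u i = 4 ^ i * cb (Suc n - i)" for i
  have lcS: "real (Suc n) * lc (Suc n) = 4 ^ Suc n" unfolding lc_def by simp
  have cb0: "cb 0 = 1" unfolding cb_def by simp
  have pt: "real (Suc n) * (lc i * cb (Suc n - i)) - (4 * real n + 2) * (lc i * cb (n - i))
      = (if i = 0 then 0 else u i - u (Suc i))" if "i \<le> n" for i
  proof -
    have e: "Suc n - i = Suc (n - i)" using that by simp
    have r: "real (Suc (n - i)) * cb (Suc (n - i)) = (4 * real (n - i) + 2) * cb (n - i)"
      by (rule cb_rec')
    have ni: "real (n - i) = real n - real i" using that by simp
    have E: "real (Suc n) * cb (Suc (n - i)) = real i * cb (Suc (n - i)) + (4 * (real n - real i) + 2) * cb (n - i)"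
    proof -
      have "real (Suc n) = real i + real (Suc (n - i))" using that by simp
      then show ?thesis using r ni by (simp add: algebra_simps)
    qed
    have "real (Suc n) * (lc i * cb (Suc n - i)) - (4 * real n + 2) * (lc i * cb (n - i))
        = lc i * (real (Suc n) * cb (Suc (n - i))) - (4 * real n + 2) * (lc i * cb (n - i))"
      unfolding e by (simp add: algebra_simps)
    also have "\<dots> = lc i * (real i * cb (Suc (n - i)) + (4 * (real n - real i) + 2) * cb (n - i)) - (4 * real n + 2) * (lc i * cb (n - i))"
      unfolding E ..
    also have "\<dots> = real i * lc i * (cb (Suc (n - i)) - 4 * cb (n - i))"
      by (simp add: algebra_simps)
    finally have "real (Suc n) * (lc i * cb (Suc n - i)) - (4 * real n + 2) * (lc i * cb (n - i))
        = real i * lc i * (cb (Suc (n - i)) - 4 * cb (n - i))" .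
    also have "\<dots> = (if i = 0 then 0 else u i - u (Suc i))"
      unfolding u_def lc_def using e by (simp add: algebra_simps)
    finally show ?thesis .
  qed
  have "real (Suc n) * (\<Sum>i\<le>Suc n. lc i * cb (Suc n - i)) - (4 * real n + 2) * (\<Sum>i\<le>n. lc i * cb (n - i))
      = (\<Sum>i\<le>n. real (Suc n) * (lc i * cb (Suc n - i)) - (4 * real n + 2) * (lc i * cb (n - i))) + 4 ^ Suc n"
    using lcS cb0 by (simp add: sum_distrib_left sum_subtractf distrib_left del: of_nat_Suc)
  also have "\<dots> = (\<Sum>i\<le>n. (if i = 0 then 0 else u i - u (Suc i))) + 4 ^ Suc n"
    using pt by simp
  also have "(\<Sum>i\<le>n. (if i = 0 then 0 else u i - u (Suc i))) = (\<Sum>i = 1..n. u i - u (Suc i))"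
  proof -
    have "(\<Sum>i\<le>n. (if i = 0 then 0 else u i - u (Suc i))) = (\<Sum>i\<in>{1..n}. (if i = 0 then 0 else u i - u (Suc i)))"
      by (rule sum.mono_neutral_right) auto
    also have "\<dots> = (\<Sum>i = 1..n. u i - u (Suc i))" by simp
    finally show ?thesis .
  qed
  also have "(\<Sum>i = 1..n. u i - u (Suc i)) = u 1 - u (Suc n)"
    using sum_Suc_diff[of 1 n "\<lambda>i. - u i"] by (simp add: sum_negf)
  finally show ?thesis unfolding u_def using cb0 by simp
qed

lemma S_closed: "(\<Sum>i\<le>n. lc i * cb (n - i)) = 2 * cb n * Oh n"
proof (induction n)
  case 0
  then show ?case by (simp add: lc_def Oh_0)
next
  case (Suc n)
  have "real (Suc n) * (\<Sum>i\<le>Suc n. lc i * cb (Suc n - i)) = real (Suc n) * (2 * cb (Suc n) * Oh (Suc n))"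
  proof -
    have pos: "2 * real n + 1 > 0" by simp
    have "real (Suc n) * (2 * cb (Suc n) * Oh (Suc n)) = 2 * (real (Suc n) * cb (Suc n)) * Oh (Suc n)"
      by (simp only: ac_simps)
    also have "\<dots> = 2 * ((4 * real n + 2) * cb n) * (Oh n + 1 / (2 * real n + 1))"
      unfolding cb_rec' Oh_Suc ..
    also have "\<dots> = (4 * real n + 2) * (2 * cb n * Oh n) + 4 * cb n"
      using pos by (simp add: field_simps)
    finally show ?thesis unfolding S_rec Suc by simp
  qed
  then show ?case by (subst (asm) mult_left_cancel) auto
qed


lemma cb_series:
  assumes "\<bar>x\<bar> < 1/4"
  shows "(\<lambda>n. cb n * x ^ n) sums ((1 - 4 * x) powr (-1/2))"
proof -
  have "\<bar>-4 * x\<bar> < 1" using assms by simp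
  from gen_binomial_real[OF this, of "-1/2"]
  have "(\<lambda>n. ((-1/2) gchoose n) * (-4 * x) ^ n) sums ((1 + -4 * x) powr (-1/2))" .
  moreover have "((-1/2) gchoose n) * (-4 * x) ^ n = cb n * x ^ n" for n
    using gchoose_half[of n] unfolding cb_def power_mult_distrib by (simp add: mult.assoc)
  ultimately show ?thesis by simp
qed

lemma lc_series:
  assumes "\<bar>x\<bar> < 1/4"
  shows "(\<lambda>n. lc n * x ^ n) sums (- ln (1 - 4 * x))"
proof -
  have "\<bar>-4 * x\<bar> < 1" using assms by simp
  from sums_minus[OF ln_series'[OF this]]
  have "(\<lambda>n. - (- ((- (-4 * x)) ^ n) / real n)) sums (- ln (1 + -4 * x))" .
  moreover have "- (- ((- (-4 * x)) ^ n) / real n) = lc n * x ^ n" for n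
    unfolding lc_def by (simp add: power_mult_distrib)
  ultimately show ?thesis by simp
qed

lemma key_series:
  assumes "\<bar>x\<bar> < 1/4"
  shows "(\<lambda>n. cb n * Oh n * x ^ n) sums (- ln (1 - 4 * x) * (1 - 4 * x) powr (-1/2) / 2)"
proof -
  have ax: "\<bar>\<bar>x\<bar>\<bar> < 1/4" using assms by simp
  have lc_nn: "lc n \<ge> 0" for n unfolding lc_def by simp
  have cb_nn: "cb n \<ge> 0" for n unfolding cb_def by simp
  have s1: "summable (\<lambda>n. norm (lc n * x ^ n))"
  proof -
    have "norm (lc n * x ^ n) = lc n * \<bar>x\<bar> ^ n" for n
      using lc_nn[of n] by (simp add: abs_mult power_abs)
    then show ?thesis using sums_summable[OF lc_series[OF ax]] by simp
  qed
  have s2: "summable (\<lambda>n. norm (cb n * x ^ n))"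
  proof -
    have "norm (cb n * x ^ n) = cb n * \<bar>x\<bar> ^ n" for n
      using cb_nn[of n] by (simp add: abs_mult power_abs)
    then show ?thesis using sums_summable[OF cb_series[OF ax]] by simp
  qed
  from Cauchy_product_sums[OF s1 s2]
  have C: "(\<lambda>k. \<Sum>i\<le>k. lc i * x ^ i * (cb (k - i) * x ^ (k - i)))
      sums ((\<Sum>k. lc k * x ^ k) * (\<Sum>k. cb k * x ^ k))" .
  have e: "(\<Sum>i\<le>k. lc i * x ^ i * (cb (k - i) * x ^ (k - i))) = 2 * (cb k * Oh k * x ^ k)" for k
  proof -
    have "(\<Sum>i\<le>k. lc i * x ^ i * (cb (k - i) * x ^ (k - i))) = (\<Sum>i\<le>k. lc i * cb (k - i) * x ^ k)"
    proof (rule sum.cong)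
      fix i assume "i \<in> {..k}"
      then have "x ^ i * x ^ (k - i) = x ^ k" by (simp flip: power_add)
      then show "lc i * x ^ i * (cb (k - i) * x ^ (k - i)) = lc i * cb (k - i) * x ^ k"
        by (metis mult.assoc mult.left_commute)
    qed simp
    also have "\<dots> = (\<Sum>i\<le>k. lc i * cb (k - i)) * x ^ k" by (simp add: sum_distrib_right)
    also have "\<dots> = 2 * (cb k * Oh k * x ^ k)" unfolding S_closed by simp
    finally show ?thesis .
  qed
  have "(\<lambda>k. 2 * (cb k * Oh k * x ^ k)) sums (- ln (1 - 4 * x) * (1 - 4 * x) powr (-1/2))"
    using C unfolding e sums_unique[OF lc_series[OF assms], symmetric] sums_unique[OF cb_series[OF assms], symmetric] .
  from sums_divide[OF this, of 2] show ?thesis by simp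
qed



lemma gib_pos_eq: "gib a b (int m) = gib_pos a b m" unfolding gib_def by simp
lemma gib_neg_eq: "gib a b (- int m) = gib_neg a b m"
  unfolding gib_def by (cases m) (auto simp del: of_nat_Suc)

lemma gib_rec: "gib a b (k + 2) = gib a b (k + 1) + gib a b k"
proof -
  consider (p) m where "k = int m" | (m1) "k = -1" | (n) m where "k = - int (Suc (Suc m))"
  proof -
    consider "k \<ge> 0" | "k = -1" | "k \<le> -2" by linarith
    then show ?thesis
    proof cases
      case 1 then show ?thesis using that(1)[of "nat k"] by simp
    next
      case 2 then show ?thesis using that(2) by simp
    next
      case 3
      then have "k = - int (Suc (Suc (nat (- k - 2))))" by simp
      then show ?thesis using that(3) by blast
    qed
  qed
  then show ?thesis
  proof cases
    case p
    have e: "k + 2 = int (Suc (Suc m))" "k + 1 = int (Suc m)" using p by auto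
    have "gib a b (k + 2) = gib_pos a b (Suc (Suc m))" unfolding e gib_pos_eq ..
    moreover have "gib a b (k + 1) = gib_pos a b (Suc m)" unfolding e gib_pos_eq ..
    moreover have "gib a b k = gib_pos a b m" unfolding p gib_pos_eq ..
    ultimately show ?thesis by simp
  next
    case m1
    then show ?thesis using gib_neg_eq[of a b 1] gib_pos_eq[of a b 0] gib_pos_eq[of a b 1] by simp
  next
    case n
    have e: "k + 2 = - int m" "k + 1 = - int (Suc m)" using n by auto
    have "gib a b (k + 2) = gib_neg a b m" unfolding e gib_neg_eq ..
    moreover have "gib a b (k + 1) = gib_neg a b (Suc m)" unfolding e gib_neg_eq ..
    moreover have "gib a b k = gib_neg a b (Suc (Suc m))" unfolding n gib_neg_eq ..
    ultimately show ?thesis by simp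
  qed
qed

lemma rec_unique:
  fixes f g :: "int \<Rightarrow> real"
  assumes f: "\<And>k. f (k + 2) = f (k + 1) + f k" and g: "\<And>k. g (k + 2) = g (k + 1) + g k"
    and h0: "f 0 = g 0" and h1: "f 1 = g 1"
  shows "f k = g k"
proof -
  have P: "f (int n) = g (int n) \<and> f (int n + 1) = g (int n + 1)" for n
  proof (induction n)
    case 0 then show ?case using h0 h1 by simp
  next
    case (Suc n)
    have A0: "f (int n + 2) = g (int n + 2)" using f[of "int n"] g[of "int n"] Suc.IH by simp
    have e2: "int n + 1 + 1 = int n + 2" by simp
    have A: "f (int n + 1 + 1) = g (int n + 1 + 1)" unfolding e2 by (rule A0)
    have e: "int (Suc n) = int n + 1" by simp
    show ?case unfolding e using A Suc.IH by blast
  qed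
  have Q: "f (- int n) = g (- int n) \<and> f (1 - int n) = g (1 - int n)" for n
  proof (induction n)
    case 0 then show ?case using h0 h1 by simp
  next
    case (Suc n)
    have e1: "- int (Suc n) + 2 = 1 - int n" "- int (Suc n) + 1 = - int n" by auto
    have "f (- int (Suc n)) = g (- int (Suc n))"
      using f[of "- int (Suc n)"] g[of "- int (Suc n)"] Suc unfolding e1 by simp
    moreover have "1 - int (Suc n) = - int n" by simp
    ultimately show ?case using Suc by simp
  qed
  show ?thesis
  proof (cases "k \<ge> 0")
    case True then show ?thesis using P[of "nat k"] by simp
  next
    case False then show ?thesis using Q[of "nat (- k)"] by simp
  qed
qed

lemma golden_facts:
  shows "golden ^ 2 = golden + 1" "(1 - golden) ^ 2 = (1 - golden) + 1"
    "golden - (1 - golden) = sqrt 5" "golden > 1" "golden < 2"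
proof -
  have s: "sqrt 5 ^ 2 = 5" by simp
  have s1: "sqrt 5 > 1" by simp
  have s3: "sqrt 5 < 3"
  proof -
    have "sqrt 5 < sqrt 9" by (subst real_sqrt_less_iff) simp
    moreover have "sqrt 9 = (3::real)" by (rule real_sqrt_unique) simp_all
    ultimately show ?thesis by linarith
  qed
  show "golden ^ 2 = golden + 1" unfolding golden_def using s by (simp add: field_simps power2_eq_square)
  show "(1 - golden) ^ 2 = (1 - golden) + 1" unfolding golden_def using s by (simp add: field_simps power2_eq_square)
  show "golden - (1 - golden) = sqrt 5" unfolding golden_def by (simp add: field_simps)
  show "golden > 1" unfolding golden_def using s1 by simp
  show "golden < 2" unfolding golden_def using s3 by simp
qed

lemma gib_binet:
  fixes t :: int and a b :: real
  defines "P \<equiv> (gib a b (t + 1) - (1 - golden) * gib a b t) / sqrt 5"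
    and "Q \<equiv> (golden * gib a b t - gib a b (t + 1)) / sqrt 5"
  shows "gib a b (int m + t) = P * golden ^ m + Q * (1 - golden) ^ m"
proof -
  note gf = golden_facts
  have s0: "sqrt 5 \<noteq> 0" by simp
  have s5: "sqrt 5 * (sqrt 5 * x) = 5 * x" for x by (simp flip: mult.assoc)
  have H: "gib a b (int m + t) = P * golden ^ m + Q * (1 - golden) ^ m
         \<and> gib a b (int (Suc m) + t) = P * golden ^ Suc m + Q * (1 - golden) ^ Suc m" for m
  proof (induction m)
    case 0
    have "P + Q = gib a b t * (golden - (1 - golden)) / sqrt 5"
      unfolding P_def Q_def by (simp add: field_simps)
    also have "\<dots> = gib a b t" unfolding gf(3) using s0 by simp
    finally have A: "gib a b (int 0 + t) = P * golden ^ 0 + Q * (1 - golden) ^ 0" by simp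
    have "P * golden + Q * (1 - golden) = gib a b (t + 1) * (golden - (1 - golden)) / sqrt 5"
      unfolding P_def Q_def by (simp add: field_simps s5)
    also have "\<dots> = gib a b (t + 1)" unfolding gf(3) using s0 by simp
    finally have B: "gib a b (int (Suc 0) + t) = P * golden ^ Suc 0 + Q * (1 - golden) ^ Suc 0"
      by (simp add: add.commute)
    show ?case using A B by simp
  next
    case (Suc m)
    have r: "gib a b (int (Suc (Suc m)) + t) = gib a b (int (Suc m) + t) + gib a b (int m + t)"
      using gib_rec[of a b "int m + t"] by (simp add: algebra_simps)
    have pa: "golden ^ Suc (Suc m) = golden ^ Suc m + golden ^ m"
    proof -
      have "golden ^ Suc (Suc m) = golden ^ 2 * golden ^ m" by (simp add: power2_eq_square)
      also have "\<dots> = (golden + 1) * golden ^ m" unfolding gf(1) ..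
      finally show ?thesis by (simp add: algebra_simps)
    qed
    have pb: "(1 - golden) ^ Suc (Suc m) = (1 - golden) ^ Suc m + (1 - golden) ^ m"
    proof -
      have "(1 - golden) ^ Suc (Suc m) = (1 - golden) ^ 2 * (1 - golden) ^ m" by (simp add: power2_eq_square)
      also have "\<dots> = ((1 - golden) + 1) * (1 - golden) ^ m" unfolding gf(2) ..
      finally show ?thesis by (simp add: algebra_simps)
    qed
    show ?case using Suc r unfolding pa pb by (simp add: algebra_simps)
  qed
  then show ?thesis by blast
qed


lemma fin: fixes a q r3 la l3 G0 G1 :: real assumes h: "a*a = a+1" and hs: "2*a - 1 = q" and a0: "a \<noteq> 0" and s0: "q \<noteq> 0"
shows "(G1 - (1-a)*G0)/q * ((2*la+l3)*(r3*a)/2) + (a*G0 - G1)/q * ((l3 - 2*la)*(r3/a)/2) = r3*q/10*(2*q*G1*la + (G1+G0+G0)*l3)"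
proof -
  have s2: "q*q = 5" using h hs by algebra
  have e1: "X/q = X*q/5" for X using s2 s0 by (simp add: field_simps)
  have e3': "r3 * (a - 1) * a = r3" using h by algebra
  have "r3/a = (r3*(a-1)*a)/a" by (simp only: e3')
  also have "\<dots> = r3*(a-1)" using a0 by simp
  finally have e3: "r3/a = r3*(a-1)" .
  have "20 * ((G1 - (1-a)*G0)*q/5 * ((2*la+l3)*(r3*a)/2) + (a*G0 - G1)*q/5 * ((l3 - 2*la)*(r3*(a-1))/2))
     = 20 * (r3*q/10*(2*q*G1*la + (G1+G0+G0)*l3))"
  proof -
    have "20 * ((G1 - (1-a)*G0)*q/5 * ((2*la+l3)*(r3*a)/2) + (a*G0 - G1)*q/5 * ((l3 - 2*la)*(r3*(a-1))/2))
      = 2 * ((G1 - (1-a)*G0)*q * ((2*la+l3)*(r3*a)) + (a*G0 - G1)*q * ((l3 - 2*la)*(r3*(a-1))))"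
      by (simp add: field_simps)
    also have "\<dots> = 2 * (r3*q*(2*q*G1*la + (G1+G0+G0)*l3))" using h hs by algebra
    also have "\<dots> = 20 * (r3*q/10*(2*q*G1*la + (G1+G0+G0)*l3))" by simp
    finally show ?thesis .
  qed
  then show ?thesis unfolding e1 e3 by (metis mult_cancel_left zero_neq_numeral)
qed

lemma powr_mhalf: "y > 0 \<Longrightarrow> y powr (-1/2) = 1 / sqrt (y::real)"
proof -
  assume y: "y > 0"
  have "y powr (-1/2) = y powr (-(1/2))" by simp
  also have "\<dots> = 1 / y powr (1/2)" by (rule powr_minus_divide)
  also have "\<dots> = 1 / sqrt y" using y by (simp add: powr_half_sqrt)
  finally show ?thesis .
qed

lemma gib_series:
  fixes t :: int and a b :: real
  shows "(\<lambda>m. let n = Suc m in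
            real ((2 * n) choose n) * Oh n * gib a b (2 * int n + t) / 12 ^ n)
          sums (sqrt 15 / 10 * (2 * sqrt 5 * gib a b (t + 1) * ln golden
                 + (gib a b (t + 2) + gib a b t) * ln 3))"
proof -
  note gf = golden_facts
  define \<alpha> where "\<alpha> = golden"
  define P where "P = (gib a b (t + 1) - (1 - golden) * gib a b t) / sqrt 5"
  define Q where "Q = (golden * gib a b t - gib a b (t + 1)) / sqrt 5"
  define x1 where "x1 = golden ^ 2 / 12"
  define x2 where "x2 = (1 - golden) ^ 2 / 12"
  have h: "\<alpha> * \<alpha> = \<alpha> + 1" using gf(1) unfolding \<alpha>_def by (simp add: power2_eq_square)
  have a1: "\<alpha> > 1" "\<alpha> < 2" using gf unfolding \<alpha>_def by auto
  have hx1: "\<bar>x1\<bar> < 1/4" unfolding x1_def using gf(1) a1 unfolding \<alpha>_def by simp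
  have hx2: "\<bar>x2\<bar> < 1/4" unfolding x2_def using gf(2) a1 unfolding \<alpha>_def by simp
  define f where "f n = P * (cb n * Oh n * x1 ^ n) + Q * (cb n * Oh n * x2 ^ n)" for n
  define V1 where "V1 = - ln (1 - 4 * x1) * (1 - 4 * x1) powr (-1/2) / 2"
  define V2 where "V2 = - ln (1 - 4 * x2) * (1 - 4 * x2) powr (-1/2) / 2"
  have fs: "f sums (P * V1 + Q * V2)"
    unfolding f_def V1_def V2_def
    by (intro sums_add sums_mult key_series hx1 hx2)
  have f0: "f 0 = 0" unfolding f_def by (simp add: Oh_0)
  have fsuc: "(\<lambda>m. f (Suc m)) sums (P * V1 + Q * V2)"
    using fs f0 by (simp add: sums_Suc_iff)
  have tmeq: "real ((2 * n) choose n) * Oh n * gib a b (2 * int n + t) / 12 ^ n = f n" for n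
  proof -
    have "gib a b (2 * int n + t) = gib a b (int (2 * n) + t)" by simp
    also have "\<dots> = P * golden ^ (2 * n) + Q * (1 - golden) ^ (2 * n)"
      unfolding P_def Q_def by (rule gib_binet)
    also have "\<dots> = P * (golden ^ 2) ^ n + Q * ((1 - golden) ^ 2) ^ n"
      by (simp add: power_mult)
    finally have g: "gib a b (2 * int n + t) = P * (golden ^ 2) ^ n + Q * ((1 - golden) ^ 2) ^ n" .
    have x1n: "x1 ^ n = (golden ^ 2) ^ n / 12 ^ n" unfolding x1_def by (simp add: power_divide)
    have x2n: "x2 ^ n = ((1 - golden) ^ 2) ^ n / 12 ^ n" unfolding x2_def by (simp add: power_divide)
    show ?thesis unfolding g f_def x1n x2n cb_def by (simp add: algebra_simps add_divide_distrib)
  qed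
  have lam: "(\<lambda>m. let n = Suc m in
            real ((2 * n) choose n) * Oh n * gib a b (2 * int n + t) / 12 ^ n) = (\<lambda>m. f (Suc m))"
    by (rule ext) (simp only: Let_def tmeq)
  have w1: "1 - 4 * x1 = 1 / (3 * \<alpha> * \<alpha>)"
  proof -
    have "1 - 4 * x1 = (3 - \<alpha> * \<alpha>) / 3" unfolding x1_def \<alpha>_def by (simp add: power2_eq_square field_simps)
    moreover have "(3 - \<alpha> * \<alpha>) * (\<alpha> * \<alpha>) = 1" using h by algebra
    then have "3 - \<alpha> * \<alpha> = 1 / (\<alpha> * \<alpha>)" using a1 by (simp add: eq_divide_eq)
    ultimately show ?thesis by (simp add: mult.assoc)
  qed
  have w2: "1 - 4 * x2 = \<alpha> * \<alpha> / 3"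
  proof -
    have "(1 - golden) ^ 2 = 2 - \<alpha>" using gf(2) unfolding \<alpha>_def by simp
    then show ?thesis unfolding x2_def using h by (simp add: field_simps)
  qed
  have r3: "sqrt 3 > 0" by simp
  have sa: "sqrt (\<alpha> * \<alpha>) = \<alpha>" using a1 by simp
  have V1e: "V1 = (2 * ln \<alpha> + ln 3) * (sqrt 3 * \<alpha>) / 2"
  proof -
    have pos: "1 / (3 * \<alpha> * \<alpha>) > 0" using a1 by simp
    have l: "ln (1 / (3 * \<alpha> * \<alpha>)) = - (ln 3 + ln \<alpha> + ln \<alpha>)"
      using a1 by (simp add: ln_div ln_mult)
    have "(1 / (3 * \<alpha> * \<alpha>)) powr (-1/2) = sqrt (3 * \<alpha> * \<alpha>)"
      by (subst powr_mhalf[OF pos]) (simp add: real_sqrt_divide)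
    also have "\<dots> = sqrt 3 * \<alpha>" using sa by (simp add: real_sqrt_mult mult.assoc)
    finally have p: "(1 / (3 * \<alpha> * \<alpha>)) powr (-1/2) = sqrt 3 * \<alpha>" .
    show ?thesis unfolding V1_def w1 l p by (simp add: algebra_simps)
  qed
  have V2e: "V2 = (ln 3 - 2 * ln \<alpha>) * (sqrt 3 / \<alpha>) / 2"
  proof -
    have pos: "\<alpha> * \<alpha> / 3 > 0" using a1 by simp
    have l: "ln (\<alpha> * \<alpha> / 3) = ln \<alpha> + ln \<alpha> - ln 3"
      using a1 by (simp add: ln_div ln_mult)
    have "(\<alpha> * \<alpha> / 3) powr (-1/2) = 1 / sqrt (\<alpha> * \<alpha> / 3)"
      by (rule powr_mhalf[OF pos])
    also have "\<dots> = sqrt 3 / \<alpha>" using sa by (simp add: real_sqrt_divide)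
    finally have p: "(\<alpha> * \<alpha> / 3) powr (-1/2) = sqrt 3 / \<alpha>" .
    show ?thesis unfolding V2_def w2 l p by (simp add: algebra_simps)
  qed
  have hs: "2 * \<alpha> - 1 = sqrt 5" using gf(3) unfolding \<alpha>_def by simp
  have val: "P * V1 + Q * V2 = sqrt 3 * sqrt 5 / 10 * (2 * sqrt 5 * gib a b (t + 1) * ln \<alpha>
      + (gib a b (t + 1) + gib a b t + gib a b t) * ln 3)"
    unfolding V1e V2e P_def Q_def \<alpha>_def[symmetric]
    by (rule fin[OF h hs]) (use a1 in simp_all)
  have s15: "sqrt 15 = sqrt 3 * sqrt 5"
    by (simp flip: real_sqrt_mult)
  have g2: "gib a b (t + 2) = gib a b (t + 1) + gib a b t" by (rule gib_rec)
  show ?thesis unfolding lam s15 g2 using fsuc val unfolding \<alpha>_def by simp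
qed


lemma gib_rec_gen: "j = i + 2 \<Longrightarrow> l = i + 1 \<Longrightarrow> gib a b j = gib a b l + gib a b i"
  using gib_rec[of a b i] by simp

lemma gib_vals: "gib a b 0 = a" "gib a b 1 = b" "gib a b 2 = a + b" "gib a b 3 = a + 2 * b"
proof -
  show g0: "gib a b 0 = a" unfolding gib_def by simp
  show g1: "gib a b 1 = b" unfolding gib_def by (simp add: One_nat_def)
  have "gib a b (0 + 2) = gib a b (0 + 1) + gib a b 0" by (rule gib_rec)
  then show g2: "gib a b 2 = a + b" using g0 g1 by simp
  have "gib a b (1 + 2) = gib a b (1 + 1) + gib a b 1" by (rule gib_rec)
  then show "gib a b 3 = a + 2 * b" using g1 g2 by simp
qed

lemma luc_id: "gib 2 1 (k + 2) + gib 2 1 k = 5 * gib 0 1 (k + 1)"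
proof (rule rec_unique[where f = "\<lambda>k. gib 2 1 (k + 2) + gib 2 1 k" and g = "\<lambda>k. 5 * gib 0 1 (k + 1)"])
  fix k :: int
  have "gib 2 1 (k + 2 + 2) = gib 2 1 (k + 1 + 2) + gib 2 1 (k + 2)" by (rule gib_rec_gen) simp_all
  moreover have "gib 2 1 (k + 2) = gib 2 1 (k + 1) + gib 2 1 k" by (rule gib_rec)
  ultimately show "gib 2 1 (k + 2 + 2) + gib 2 1 (k + 2) = gib 2 1 (k + 1 + 2) + gib 2 1 (k + 1) + (gib 2 1 (k + 2) + gib 2 1 k)"
    by linarith
next
  fix k :: int
  have "gib 0 1 (k + 2 + 1) = gib 0 1 (k + 1 + 1) + gib 0 1 (k + 1)" by (rule gib_rec_gen) simp_all
  then show "5 * gib 0 1 (k + 2 + 1) = 5 * gib 0 1 (k + 1 + 1) + 5 * gib 0 1 (k + 1)" by simp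
qed (simp_all add: gib_vals)

lemma fib_id: "gib 0 1 (k + 2) + gib 0 1 k = gib 2 1 (k + 1)"
proof (rule rec_unique[where f = "\<lambda>k. gib 0 1 (k + 2) + gib 0 1 k" and g = "\<lambda>k. gib 2 1 (k + 1)"])
  fix k :: int
  have "gib 0 1 (k + 2 + 2) = gib 0 1 (k + 1 + 2) + gib 0 1 (k + 2)" by (rule gib_rec_gen) simp_all
  moreover have "gib 0 1 (k + 2) = gib 0 1 (k + 1) + gib 0 1 k" by (rule gib_rec)
  ultimately show "gib 0 1 (k + 2 + 2) + gib 0 1 (k + 2) = gib 0 1 (k + 1 + 2) + gib 0 1 (k + 1) + (gib 0 1 (k + 2) + gib 0 1 k)"
    by linarith
next
  fix k :: int
  show "gib 2 1 (k + 2 + 1) = gib 2 1 (k + 1 + 1) + gib 2 1 (k + 1)" by (rule gib_rec_gen) simp_all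
qed (simp_all add: gib_vals)

lemma v1aux:
  fixes r q A B la l3 :: real
  assumes q: "q * q = 5"
  shows "r * q / 10 * (2 * q * A * la + 5 * B * l3) = r / 2 * (2 * A * la + q * B * l3)"
proof -
  have "r * q / 10 * (2 * q * A * la + 5 * B * l3) = r * ((q * q) * A * la) / 5 + r * q * B * l3 / 2"
    by (simp add: field_simps)
  also have "\<dots> = r * (5 * A * la) / 5 + r * q * B * l3 / 2" by (simp only: q)
  also have "\<dots> = r / 2 * (2 * A * la + q * B * l3)" by (simp add: field_simps)
  finally show ?thesis .
qed

theorem theorem17:
  fixes t :: int
  shows "((\<lambda>m. let n = Suc m in
            real ((2 * n) choose n) * Oh n * Luc (2 * int n + t) / 12 ^ n)
          sums (sqrt 3 / 2 * (2 * Luc (t + 1) * ln golden + sqrt 5 * Fib (t + 1) * ln 3)))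
       \<and> ((\<lambda>m. let n = Suc m in
            real ((2 * n) choose n) * Oh n * Fib (2 * int n + t) / 12 ^ n)
          sums (sqrt 15 / 10 * (2 * sqrt 5 * Fib (t + 1) * ln golden + Luc (t + 1) * ln 3)))
       \<and> (\<forall>a b :: real. \<not> (a = 0 \<and> b = 0) \<longrightarrow>
          ((\<lambda>m. let n = Suc m in
            real ((2 * n) choose n) * Oh n * gib a b (2 * int n + t) / 12 ^ n)
          sums (sqrt 15 / 10 * (2 * sqrt 5 * gib a b (t + 1) * ln golden
                 + (gib a b (t + 2) + gib a b t) * ln 3))))"
proof (intro conjI allI impI)
  have s15: "sqrt 15 = sqrt 3 * sqrt (5::real)" by (simp flip: real_sqrt_mult)
  have s55: "sqrt 5 * sqrt 5 = (5::real)" by simp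
  have v1: "sqrt 15 / 10 * (2 * sqrt 5 * gib 2 1 (t + 1) * ln golden + (gib 2 1 (t + 2) + gib 2 1 t) * ln 3)
      = sqrt 3 / 2 * (2 * gib 2 1 (t + 1) * ln golden + sqrt 5 * gib 0 1 (t + 1) * ln 3)"
    unfolding luc_id s15 by (rule v1aux[OF s55])
  show "(\<lambda>m. let n = Suc m in
            real ((2 * n) choose n) * Oh n * Luc (2 * int n + t) / 12 ^ n)
          sums (sqrt 3 / 2 * (2 * Luc (t + 1) * ln golden + sqrt 5 * Fib (t + 1) * ln 3))"
    unfolding Luc_def Fib_def v1[symmetric] by (rule gib_series)
  show "(\<lambda>m. let n = Suc m in
            real ((2 * n) choose n) * Oh n * Fib (2 * int n + t) / 12 ^ n)
          sums (sqrt 15 / 10 * (2 * sqrt 5 * Fib (t + 1) * ln golden + Luc (t + 1) * ln 3))"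
    unfolding Luc_def Fib_def fib_id[of t, symmetric] by (rule gib_series)
  fix a b :: real
  show "(\<lambda>m. let n = Suc m in
            real ((2 * n) choose n) * Oh n * gib a b (2 * int n + t) / 12 ^ n)
          sums (sqrt 15 / 10 * (2 * sqrt 5 * gib a b (t + 1) * ln golden
                 + (gib a b (t + 2) + gib a b t) * ln 3))"
    by (rule gib_series)
qed

end
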